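(* In the standing setting below, assume in addition that $\rho$ satisfies $$\partial_t\rho+\frac1r\partial_r(r\rho v)=\frac{k_\rho\, w}{w+K_{w\rho}}\,f\Big(1-\frac{\rho}{\rho_m}\Big)-\lambda_\rho\rho\quad\text{in } R(t)<r<L,\ 0<t<T,$$ where $k_\rho>0$, $K_{w\rho}>0$, $\lambda_\rho>0$, $\rho_m>1$ are constants and $w\ge0$, $f\ge 0$ are given continuous functions on $\Omega_T$. If $\rho(r,0)<\rho_m$ for all $R_0\le r\le L$, then $\rho<\rho_m$ in $\Omega_T$.
   Context: Standing setting. Fix constants $L>0$, $0<R_0<L$, $\beta>0$, $T>0$. Let $R\in C^1([0,T))$ with $R(0)=R_0$ and $0<R(t)<L$, and set $\Omega_T=\{(r,t): R(t)\le r\le L,\ 0\le t<T\}$. Let $\rho\ge 0$ be a classical (continuously differentiable) function on $\Omega_T$ (the matrix density), and define the pressure $P(r,t)=P(\rho(r,t))$ where $P(\rho)=\beta(\rho-1)$ for $\rho\ge1$ and $P(\rho)=0$ for $\rho<1$. Let $v(r,t)$ be a classical function on $\Omega_T$ (twice continuously differentiable in $r$) satisfying $\frac1r\partial_r(r\,\partial_r v)-\frac{v}{r^2}=\partial_r P$ for $R(t)<r<L$, with $v(L,t)=0$, $\partial_r v(R(t),t)=P(R(t),t)$, and the free-boundary law $\dot R(t)=v(R(t),t)$. Define $Q(t)=\int_{R(t)}^L y\,P(y,t)\,dy$. *)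

theory Defs
  imports "HOL-Analysis.Analysis"
begin

definition pres :: "real \<Rightarrow> real \<Rightarrow> real" where
  "pres \<beta> x = (if x \<ge> 1 then \<beta> * (x - 1) else 0)"

definition Omega :: "(real \<Rightarrow> real) \<Rightarrow> real \<Rightarrow> real \<Rightarrow> (real \<times> real) set" where
  "Omega R L T = {(r, t). R t \<le> r \<and> r \<le> L \<and> 0 \<le> t \<and> t < T}"

end

theory Submission
  imports Defs
begin

lemma deriv_max_right:
  fixes f :: "real \<Rightarrow> real"
  assumes d: "(f has_real_derivative D) (at x within {a..b})" and "a \<le> x" "x < b"
    and m: "\<And>y. y \<in> {a..b} \<Longrightarrow> f y \<le> f x"
  shows "D \<le> 0"
proof -
  have "(f has_real_derivative D) (at x within {x..b})"
    using d by (rule has_field_derivative_subset) (use assms in auto)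
  hence "((\<lambda>y. (f y - f x) / (y - x)) \<longlongrightarrow> D) (at_right x)"
    using assms by (simp add: has_field_derivative_iff at_within_Icc_at_right)
  moreover have "eventually (\<lambda>y. (f y - f x) / (y - x) \<le> 0) (at_right x)"
    unfolding eventually_at_right[OF \<open>x<b\<close>]
    by (rule exI[of _ b]) (use assms in \<open>auto intro!: divide_nonpos_pos simp: m\<close>)
  ultimately show ?thesis
    by (rule tendsto_upperbound) simp
qed
lemma deriv_max_left:
  fixes f :: "real \<Rightarrow> real"
  assumes d: "(f has_real_derivative D) (at x within {a..b})" and "a < x" "x \<le> b"
    and m: "\<And>y. y \<in> {a..b} \<Longrightarrow> f y \<le> f x"
  shows "D \<ge> 0"
proof -
  have "(f has_real_derivative D) (at x within {a..x})"
    using d by (rule has_field_derivative_subset) (use assms in auto)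
  hence "((\<lambda>y. (f y - f x) / (y - x)) \<longlongrightarrow> D) (at_left x)"
    using assms by (simp add: has_field_derivative_iff at_within_Icc_at_left)
  moreover have "eventually (\<lambda>y. (f y - f x) / (y - x) \<ge> 0) (at_left x)"
    unfolding eventually_at_left[OF \<open>a<x\<close>]
    by (rule exI[of _ a]) (use assms in \<open>auto intro!: divide_nonpos_neg simp: m\<close>)
  ultimately show ?thesis
    by (rule tendsto_lowerbound) simp
qed
lemma ext_eq:
  fixes F G :: "real \<Rightarrow> real"
  assumes "a < b" "continuous_on {a..b} F" "continuous_on {a..b} G"
    "\<And>x. a < x \<Longrightarrow> x < b \<Longrightarrow> F x = G x" "x \<in> {a..b}"
  shows "F x = G x"
proof -
  have "closed ({a..b} \<inter> (\<lambda>x. F x - G x) -` {0})"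
    by (rule continuous_closed_preimage) (auto intro!: continuous_intros assms)
  moreover have "{a<..<b} \<subseteq> {a..b} \<inter> (\<lambda>x. F x - G x) -` {0}" using assms by auto
  ultimately have "closure {a<..<b} \<subseteq> {a..b} \<inter> (\<lambda>x. F x - G x) -` {0}"
    by (rule closure_minimal[rotated])
  thus ?thesis using assms by auto
qed
lemma slice:
  assumes "continuous_on S (\<lambda>(r,t). X r t)" "\<And>r. r \<in> {a..b} \<Longrightarrow> (r,t) \<in> S"
  shows "continuous_on {a..b} (\<lambda>r. X r t)"
proof -
  have "continuous_on {a..b} ((\<lambda>(r,t). X r t) \<circ> (\<lambda>r. (r,t)))"
    by (rule continuous_on_compose) (auto intro!: continuous_intros continuous_on_subset[OF assms(1)] assms(2))
  thus ?thesis by (simp add: o_def)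
qed

lemma cont_pt2:
  fixes X :: "real \<Rightarrow> real \<Rightarrow> real" and r t e :: real
  assumes "continuous_on S (\<lambda>(r,t). X r t)" "(r,t) \<in> S" "e > 0"
  shows "\<exists>d>0. \<forall>r' t'. (r',t') \<in> S \<longrightarrow> \<bar>r'-r\<bar> < d \<longrightarrow> \<bar>t'-t\<bar> < d \<longrightarrow> \<bar>X r' t' - X r t\<bar> < e"
proof -
  obtain d where d: "d > 0" "\<forall>y\<in>S. dist y (r,t) < d \<longrightarrow> dist ((\<lambda>(r,t). X r t) y) ((\<lambda>(r,t). X r t) (r,t)) < e"
    using assms unfolding continuous_on_iff by blast
  show ?thesis
  proof (intro exI[of _ "d/2"] conjI allI impI)
    fix r' t' assume h: "(r',t') \<in> S" "\<bar>r'-r\<bar> < d/2" "\<bar>t'-t\<bar> < d/2"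
    have "(r'-r)^2 < (d/2)^2" "(t'-t)^2 < (d/2)^2" using h d
      by (metis abs_ge_zero power2_abs power_strict_mono zero_less_numeral)+
    moreover have "d^2 > 0" using d by simp
    ultimately have "(r'-r)^2 + (t'-t)^2 < d^2" by (simp add: power_divide) (smt (verit) zero_le_power2)
    hence "sqrt ((r'-r)^2 + (t'-t)^2) < sqrt (d^2)" by (simp only: real_sqrt_less_iff)
    hence "dist (r',t') (r,t) < d" using d by (simp add: dist_Pair_Pair dist_real_def)
    thus "\<bar>X r' t' - X r t\<bar> < e" using d h by (auto simp: dist_real_def)
  qed (use d in auto)
qed

lemma cont_pt1:
  fixes g :: "real \<Rightarrow> real"
  assumes "continuous_on S g" "t \<in> S" "e > 0"
  shows "\<exists>d>0. \<forall>s\<in>S. \<bar>s - t\<bar> < d \<longrightarrow> \<bar>g s - g t\<bar> < e"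
  using assms unfolding continuous_on_iff dist_real_def by metis

lemma pres_alt: "pres \<beta> y = \<beta> * max (y - 1) 0"
  by (simp add: pres_def max_def)

lemma pres_cont: "continuous_on S (\<lambda>x. g x) \<Longrightarrow> continuous_on S (\<lambda>x. pres \<beta> (g x))"
  unfolding pres_alt by (intro continuous_intros)

lemma pres_mono: "\<beta> > 0 \<Longrightarrow> x \<le> y \<Longrightarrow> pres \<beta> x \<le> pres \<beta> y"
  unfolding pres_alt by (auto intro!: mult_left_mono)

lemma prod_close:
  fixes p q p0 q0 e :: real
  assumes "\<bar>p - p0\<bar> < e" "\<bar>q - q0\<bar> < e" "e \<le> 1"
  shows "p*q \<le> p0*q0 + e*(\<bar>q0\<bar>+1) + \<bar>p0\<bar>*e"
proof -
  have eq: "p*q - p0*q0 = (p - p0)*q + p0*(q - q0)" by algebra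
  have "\<bar>q\<bar> \<le> \<bar>q0\<bar> + 1" using assms by linarith
  hence "\<bar>(p - p0)*q\<bar> \<le> e*(\<bar>q0\<bar>+1)" using assms unfolding abs_mult
    by (intro mult_mono) auto
  moreover have "\<bar>p0*(q - q0)\<bar> \<le> \<bar>p0\<bar>*e" using assms unfolding abs_mult
    by (intro mult_left_mono) auto
  ultimately show ?thesis using eq by linarith
qed

lemma arithB:
  fixes Q Q0 p P0 D0 e :: real
  assumes "Q < Q0 + e" "\<bar>p - P0\<bar> < e" "Q > p * (- D0 + e)" "0 < e" "e \<le> 1"
    "e * (\<bar>D0\<bar> + \<bar>P0\<bar> + 3) \<le> - (Q0 + D0 * P0)"
  shows False
proof -
  have "\<bar>D0 * (p - P0)\<bar> \<le> \<bar>D0\<bar> * e" using assms unfolding abs_mult by (intro mult_left_mono) auto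
  hence a: "D0 * p \<le> D0 * P0 + \<bar>D0\<bar> * e" by (simp add: right_diff_distrib abs_le_iff)
  have "\<bar>p\<bar> \<le> \<bar>P0\<bar> + 1" using assms by linarith
  hence "e * \<bar>p\<bar> \<le> e * (\<bar>P0\<bar> + 1)" using assms by (intro mult_left_mono) auto
  moreover have "- (e * p) \<le> e * \<bar>p\<bar>" using assms(4) by (metis abs_ge_minus_self abs_mult abs_of_pos)
  ultimately have b: "- (e * p) \<le> e * \<bar>P0\<bar> + e" by (simp add: distrib_left)
  have "p * (- D0 + e) = - (D0 * p) + e * p" by (simp add: algebra_simps)
  hence "0 < Q0 + e + D0 * p - e * p" using assms(1,3) by linarith
  hence "0 < Q0 + D0 * P0 + e * \<bar>D0\<bar> + e * \<bar>P0\<bar> + 2 * e" using a b by (simp add: mult.commute)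
  moreover have "e * (\<bar>D0\<bar> + \<bar>P0\<bar> + 3) = e * \<bar>D0\<bar> + e * \<bar>P0\<bar> + 3 * e" by (simp add: algebra_simps)
  ultimately show False using assms by linarith
qed

lemma arithC:
  fixes Q Q0 p P0 q D0 e :: real
  assumes "Q < Q0 + e" "\<bar>p - P0\<bar> < e" "\<bar>q - D0\<bar> < e" "Q + p * q > 0" "0 < e" "e \<le> 1"
    "e * (\<bar>D0\<bar> + \<bar>P0\<bar> + 3) \<le> - (Q0 + D0 * P0)"
  shows False
proof -
  have "p * q \<le> P0 * D0 + e * (\<bar>D0\<bar> + 1) + \<bar>P0\<bar> * e" by (rule prod_close) (use assms in auto)
  moreover have "e * (\<bar>D0\<bar> + \<bar>P0\<bar> + 3) = e * \<bar>D0\<bar> + e * \<bar>P0\<bar> + 3 * e" by (simp add: algebra_simps)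
  moreover have "e * (\<bar>D0\<bar> + 1) = e * \<bar>D0\<bar> + e" by (simp add: algebra_simps)
  ultimately show False using assms by (simp add: mult.commute)
qed

theorem lemma4p3:
  fixes L R0 \<beta> T k\<rho> Kw\<rho> lam\<rho> \<rho>m :: real
    and R dR :: "real \<Rightarrow> real"
    and \<rho> \<rho>r \<rho>t v vr vrr Pr w f :: "real \<Rightarrow> real \<Rightarrow> real"
  assumes L: "L > 0" and R0: "0 < R0" "R0 < L" and \<beta>: "\<beta> > 0" and T: "T > 0"
    \<comment> \<open>R is C^1 on [0,T), R(0)=R0, 0 < R(t) < L\<close>
    and R_deriv: "\<And>t. t \<in> {0..<T} \<Longrightarrow> (R has_real_derivative dR t) (at t within {0..<T})"
    and dR_cont: "continuous_on {0..<T} dR"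
    and R_init: "R 0 = R0"
    and R_bounds: "\<And>t. t \<in> {0..<T} \<Longrightarrow> 0 < R t \<and> R t < L"
    \<comment> \<open>rho is a nonnegative C^1 function on Omega_T (continuous partial derivatives)\<close>
    and rho_cont: "continuous_on (Omega R L T) (\<lambda>(r, t). \<rho> r t)"
    and rho_r: "\<And>r t. (r, t) \<in> Omega R L T \<Longrightarrow>
                  ((\<lambda>y. \<rho> y t) has_real_derivative \<rho>r r t) (at r within {R t..L})"
    and rho_t: "\<And>r t. (r, t) \<in> Omega R L T \<Longrightarrow>
                  ((\<lambda>s. \<rho> r s) has_real_derivative \<rho>t r t)
                    (at t within {s. (r, s) \<in> Omega R L T})"
    and rho_r_cont: "continuous_on (Omega R L T) (\<lambda>(r, t). \<rho>r r t)"
    and rho_t_cont: "continuous_on (Omega R L T) (\<lambda>(r, t). \<rho>t r t)"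
    and rho_nonneg: "\<And>r t. (r, t) \<in> Omega R L T \<Longrightarrow> \<rho> r t \<ge> 0"
    \<comment> \<open>v is classical on Omega_T, twice continuously differentiable in r\<close>
    and v_cont: "continuous_on (Omega R L T) (\<lambda>(r, t). v r t)"
    and v_r: "\<And>r t. (r, t) \<in> Omega R L T \<Longrightarrow>
                  ((\<lambda>y. v y t) has_real_derivative vr r t) (at r within {R t..L})"
    and v_rr: "\<And>r t. (r, t) \<in> Omega R L T \<Longrightarrow>
                  ((\<lambda>y. vr y t) has_real_derivative vrr r t) (at r within {R t..L})"
    and v_r_cont: "continuous_on (Omega R L T) (\<lambda>(r, t). vr r t)"
    and v_rr_cont: "continuous_on (Omega R L T) (\<lambda>(r, t). vrr r t)"
    \<comment> \<open>elliptic equation for v, with d_r P = Pr\<close>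
    and P_r: "\<And>r t. t \<in> {0..<T} \<Longrightarrow> R t < r \<Longrightarrow> r < L \<Longrightarrow>
                  ((\<lambda>y. pres \<beta> (\<rho> y t)) has_real_derivative Pr r t) (at r)"
    and v_eq: "\<And>r t. t \<in> {0..<T} \<Longrightarrow> R t < r \<Longrightarrow> r < L \<Longrightarrow>
                  (1 / r) * (vr r t + r * vrr r t) - v r t / r\<^sup>2 = Pr r t"
    and v_L: "\<And>t. t \<in> {0..<T} \<Longrightarrow> v L t = 0"
    and v_R: "\<And>t. t \<in> {0..<T} \<Longrightarrow> vr (R t) t = pres \<beta> (\<rho> (R t) t)"
    and free_bdry: "\<And>t. t \<in> {0..<T} \<Longrightarrow> dR t = v (R t) t"
    \<comment> \<open>additional hypotheses of the lemma\<close>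
    and params: "k\<rho> > 0" "Kw\<rho> > 0" "lam\<rho> > 0" "\<rho>m > 1"
    and w_cont: "continuous_on (Omega R L T) (\<lambda>(r, t). w r t)"
    and f_cont: "continuous_on (Omega R L T) (\<lambda>(r, t). f r t)"
    and w_nonneg: "\<And>r t. (r, t) \<in> Omega R L T \<Longrightarrow> w r t \<ge> 0"
    and f_nonneg: "\<And>r t. (r, t) \<in> Omega R L T \<Longrightarrow> f r t \<ge> 0"
    and rho_eq: "\<And>r t. 0 < t \<Longrightarrow> t < T \<Longrightarrow> R t < r \<Longrightarrow> r < L \<Longrightarrow>
                  \<rho>t r t + (1 / r) * (\<rho> r t * v r t + r * (\<rho>r r t * v r t + \<rho> r t * vr r t))
                  = k\<rho> * w r t / (w r t + Kw\<rho>) * f r t * (1 - \<rho> r t / \<rho>m) - lam\<rho> * \<rho> r t"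
    and rho_init: "\<And>r. R0 \<le> r \<Longrightarrow> r \<le> L \<Longrightarrow> \<rho> r 0 < \<rho>m"
  shows "\<forall>(r, t) \<in> Omega R L T. \<rho> r t < \<rho>m"
proof (rule ccontr)
  assume "\<not> ?thesis"
  then obtain r0 t0 where rt0: "(r0,t0) \<in> Omega R L T" "\<rho> r0 t0 \<ge> \<rho>m" by (auto simp: not_less)
  have t0: "0 \<le> t0" "t0 < T" "R t0 \<le> r0" "r0 \<le> L" using rt0 by (auto simp: Omega_def)
  have Rcont: "continuous_on {0..<T} R"
    unfolding continuous_on_eq_continuous_within using R_deriv DERIV_continuous by blast
  define S0 where "S0 = {0..L} \<times> {0..t0}"
  define C1 where "C1 = S0 \<inter> (\<lambda>p. R (snd p) - fst p) -` {..0}"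
  define K where "K = C1 \<inter> (\<lambda>(r,t). \<rho> r t) -` {\<rho>m..}"
  have C1_Om: "C1 \<subseteq> Omega R L T"
    unfolding C1_def S0_def Omega_def using t0 by auto
  have cS0: "compact S0" unfolding S0_def by (intro compact_Times compact_Icc)
  have cR: "continuous_on S0 (\<lambda>p. R (snd p))"
    by (rule continuous_on_compose2[OF Rcont]) (use t0 in \<open>auto simp: S0_def intro!: continuous_intros\<close>)
  have clC1: "closed C1" unfolding C1_def
    by (rule continuous_closed_preimage) (auto simp: S0_def intro!: closed_Times continuous_intros cR[unfolded S0_def])
  have clK: "closed K" unfolding K_def
    by (rule continuous_closed_preimage[OF continuous_on_subset[OF rho_cont C1_Om] clC1]) simp
  have "K \<subseteq> S0" by (auto simp: K_def C1_def)
  hence "K = S0 \<inter> K" by blast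
  hence cK: "compact K" using compact_Int_closed[OF cS0 clK] by simp
  have "(r0,t0) \<in> K" using t0 rt0 R_bounds[of t0] by (auto simp: K_def C1_def S0_def)
  hence "K \<noteq> {}" by blast
  then obtain p1 where p1: "p1 \<in> K" "\<forall>y\<in>K. snd p1 \<le> snd y"
    using continuous_attains_inf[OF cK \<open>K \<noteq> {}\<close> continuous_on_snd[OF continuous_on_id]] by auto
  obtain r1 t1 where p1eq: "p1 = (r1, t1)" by fastforce
  have t1: "0 \<le> t1" "t1 \<le> t0" "R t1 \<le> r1" "r1 \<le> L" "\<rho> r1 t1 \<ge> \<rho>m"
    using p1 p1eq by (auto simp: K_def C1_def S0_def)
  have t1T: "t1 \<in> {0..<T}" using t1 t0 by auto
  have past: "\<rho> r s < \<rho>m" if "(r,s) \<in> Omega R L T" "s < t1" for r s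
  proof (rule ccontr)
    assume "\<not> \<rho> r s < \<rho>m"
    moreover have "0 < R s" using that R_bounds[of s] by (auto simp: Omega_def)
    ultimately have "(r,s) \<in> K" using that t1 by (auto simp: K_def C1_def S0_def Omega_def)
    thus False using p1 p1eq that by force
  qed
  have t1pos: "0 < t1"
  proof (rule ccontr)
    assume "\<not> 0 < t1"
    hence "t1 = 0" using t1 by simp
    thus False using rho_init[of r1] t1 R_init R0 by auto
  qed
  have Rt1: "0 < R t1" "R t1 < L" using R_bounds[OF t1T] by auto
  have Om_t1: "(r, t1) \<in> Omega R L T" if "r \<in> {R t1..L}" for r
    using that t1T by (auto simp: Omega_def)
  have rho_sl: "continuous_on {R t1..L} (\<lambda>r. \<rho> r t1)" by (rule slice[OF rho_cont Om_t1])
  obtain rs where rs: "rs \<in> {R t1..L}" "\<forall>y\<in>{R t1..L}. \<rho> y t1 \<le> \<rho> rs t1"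
    using continuous_attains_sup[OF compact_Icc _ rho_sl] Rt1 by auto
  define M where "M = \<rho> rs t1"
  have M: "M \<ge> \<rho>m" using rs t1 unfolding M_def by force
  have rsO: "(rs, t1) \<in> Omega R L T" using Om_t1 rs by blast
  have rspos: "rs > 0" using rs Rt1 by auto
  have caseA: "\<rho>t rs t1 \<ge> 0" if rsgt: "rs > R t1"
  proof (rule ccontr)
    assume neg: "\<not> ?thesis"
    obtain d where d: "d>0" "\<forall>r' t'. (r',t') \<in> Omega R L T \<longrightarrow> \<bar>r'-rs\<bar> < d \<longrightarrow> \<bar>t'-t1\<bar> < d \<longrightarrow> \<bar>\<rho>t r' t' - \<rho>t rs t1\<bar> < - \<rho>t rs t1"
      using cont_pt2[OF rho_t_cont rsO, of "- \<rho>t rs t1"] neg by auto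
    obtain \<eta> where \<eta>: "\<eta>>0" "\<forall>s\<in>{0..<T}. \<bar>s - t1\<bar> < \<eta> \<longrightarrow> \<bar>R s - R t1\<bar> < rs - R t1"
      using cont_pt1[OF Rcont t1T, of "rs - R t1"] rsgt by auto
    define \<epsilon> where "\<epsilon> = min (min (d/2) (\<eta>/2)) t1"
    have \<epsilon>: "0 < \<epsilon>" "\<epsilon> \<le> t1" "\<epsilon> < d" "\<epsilon> < \<eta>" using d \<eta> t1pos unfolding \<epsilon>_def by auto
    define s where "s = t1 - \<epsilon>"
    have inO: "(rs,\<tau>) \<in> Omega R L T" if "\<tau> \<in> {s..t1}" for \<tau>
    proof -
      have "\<tau> \<in> {0..<T}" "\<bar>\<tau> - t1\<bar> < \<eta>" using that \<epsilon> t1T unfolding s_def by auto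
      hence "\<bar>R \<tau> - R t1\<bar> < rs - R t1" using \<eta>(2) by blast
      hence "R \<tau> \<le> rs" by linarith
      thus ?thesis using rs \<open>\<tau> \<in> {0..<T}\<close> by (auto simp: Omega_def)
    qed
    have "\<exists>x\<in>{s..t1}. \<rho> rs t1 - \<rho> rs s = (*) (\<rho>t rs x) (t1 - s)"
    proof (rule mvt_very_simple)
      show "s \<le> t1" using \<epsilon> unfolding s_def by simp
      fix x assume "s \<le> x" "x \<le> t1"
      hence "((\<lambda>\<tau>. \<rho> rs \<tau>) has_real_derivative \<rho>t rs x) (at x within {s..t1})"
        using rho_t[OF inO[of x]] inO by (auto intro: has_field_derivative_subset)
      thus "((\<lambda>\<tau>. \<rho> rs \<tau>) has_derivative (*) (\<rho>t rs x)) (at x within {s..t1})"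
        by (simp add: has_field_derivative_def)
    qed
    then obtain \<tau> where \<tau>: "\<tau> \<in> {s..t1}" "\<rho> rs t1 - \<rho> rs s = \<rho>t rs \<tau> * (t1 - s)" by auto
    have "\<rho> rs s < \<rho>m" using past[OF inO[of s]] \<epsilon> unfolding s_def by auto
    hence "\<rho>t rs \<tau> * (t1 - s) > 0" using M \<tau> unfolding M_def by linarith
    moreover have "t1 - s > 0" using \<epsilon> unfolding s_def by simp
    ultimately have pos: "\<rho>t rs \<tau> > 0" by (simp add: zero_less_mult_iff)
    have "\<bar>\<tau> - t1\<bar> < d" using \<tau> \<epsilon> unfolding s_def by auto
    hence "\<bar>\<rho>t rs \<tau> - \<rho>t rs t1\<bar> < - \<rho>t rs t1" using d inO[OF \<tau>(1)] by auto
    thus False using pos by linarith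
  qed
  have sl: "continuous_on {R t1..L} (\<lambda>r. \<rho> r t1)" "continuous_on {R t1..L} (\<lambda>r. \<rho>r r t1)"
    "continuous_on {R t1..L} (\<lambda>r. \<rho>t r t1)" "continuous_on {R t1..L} (\<lambda>r. v r t1)"
    "continuous_on {R t1..L} (\<lambda>r. vr r t1)" "continuous_on {R t1..L} (\<lambda>r. w r t1)"
    "continuous_on {R t1..L} (\<lambda>r. f r t1)"
    using slice[OF rho_cont Om_t1] slice[OF rho_r_cont Om_t1] slice[OF rho_t_cont Om_t1]
      slice[OF v_cont Om_t1] slice[OF v_r_cont Om_t1] slice[OF w_cont Om_t1] slice[OF f_cont Om_t1]
    by auto
  define F where "F = (\<lambda>r. \<rho>t r t1 + (1 / r) * (\<rho> r t1 * v r t1 + r * (\<rho>r r t1 * v r t1 + \<rho> r t1 * vr r t1)))"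
  define G where "G = (\<lambda>r. k\<rho> * w r t1 / (w r t1 + Kw\<rho>) * f r t1 * (1 - \<rho> r t1 / \<rho>m) - lam\<rho> * \<rho> r t1)"
  have Fc: "continuous_on {R t1..L} F" unfolding F_def
    using Rt1 by (intro continuous_intros sl) auto
  have Gc: "continuous_on {R t1..L} G" unfolding G_def
    using params w_nonneg[OF Om_t1] by (intro continuous_intros sl) (auto simp: add_nonneg_pos[THEN less_imp_neq, symmetric])
  have FG: "F rs = G rs"
  proof (rule ext_eq[OF _ Fc Gc _ rs(1)])
    show "R t1 < L" using Rt1 by simp
    fix x assume x: "R t1 < x" "x < L"
    have "t1 < T" using t1T by simp
    from rho_eq[OF t1pos this x] show "F x = G x" by (simp only: F_def G_def)
  qed
  have intr: "at x within {R t1..L} = at x" if "R t1 < x" "x < L" for x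
    by (rule at_within_interior) (use that in simp)
  have dv: "((\<lambda>y. v y t1) has_real_derivative vr x t1) (at x)"
    and dvr: "((\<lambda>y. vr y t1) has_real_derivative vrr x t1) (at x)"
    and dP: "((\<lambda>y. pres \<beta> (\<rho> y t1)) has_real_derivative Pr x t1) (at x)"
    if x: "R t1 < x" "x < L" for x
  proof -
    have xO: "(x,t1) \<in> Omega R L T" using Om_t1 x by auto
    show "((\<lambda>y. v y t1) has_real_derivative vr x t1) (at x)" using v_r[OF xO] intr[OF x] by simp
    show "((\<lambda>y. vr y t1) has_real_derivative vrr x t1) (at x)" using v_rr[OF xO] intr[OF x] by simp
    show "((\<lambda>y. pres \<beta> (\<rho> y t1)) has_real_derivative Pr x t1) (at x)" using P_r[OF t1T x] .
  qed
  define g where "g = (\<lambda>r. v r t1 / r + vr r t1 - pres \<beta> (\<rho> r t1))"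
  have gd: "(g has_real_derivative 0) (at x)" if x: "R t1 < x" "x < L" for x
  proof -
    have xpos: "x > 0" using x Rt1 by simp
    have "(g has_real_derivative ((vr x t1 * x - v x t1 * 1)/(x*x) + vrr x t1 - Pr x t1)) (at x)"
      unfolding g_def using xpos
      by (intro DERIV_diff DERIV_add DERIV_divide dv[OF x] dvr[OF x] dP[OF x] DERIV_ident) auto
    moreover have "(vr x t1 * x - v x t1 * 1)/(x*x) + vrr x t1 - Pr x t1 = 0"
    proof -
      have "(1 / x) * (vr x t1 + x * vrr x t1) - v x t1 / x^2 = (vr x t1 * x - v x t1 * 1)/(x*x) + vrr x t1"
        using xpos by (simp add: field_simps power2_eq_square)
      thus ?thesis using v_eq[OF t1T x] by linarith
    qed
    ultimately show ?thesis by simp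
  qed
  have gc: "continuous_on {R t1..L} g" unfolding g_def
    using Rt1 by (intro continuous_intros sl pres_cont) auto
  define c where "c = v (R t1) t1 / R t1"
  have Dfact: "v x t1 / x + vr x t1 = pres \<beta> (\<rho> x t1) + c" if "x \<in> {R t1..L}" for x
  proof -
    have "g x = g (R t1)" using DERIV_isconst2[OF Rt1(2) gc gd, of x] that by simp
    also have "g (R t1) = c" unfolding g_def c_def using v_R[OF t1T] by simp
    finally show ?thesis unfolding g_def by simp
  qed
  have PM: "pres \<beta> M > 0" using M params \<beta> by (simp add: pres_def)
  have Dpos: "v rs t1 / rs + vr rs t1 > 0"
  proof (rule ccontr)
    assume "\<not> ?thesis"
    hence h1: "pres \<beta> M + c \<le> 0" using Dfact[OF rs(1)] unfolding M_def by simp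
    hence cneg: "c < 0" using PM by simp
    define h where "h = (\<lambda>r. r * v r t1)"
    have hd: "(h has_real_derivative (1 * v x t1 + vr x t1 * x)) (at x)" if "R t1 < x" "x < L" for x
      unfolding h_def by (intro DERIV_mult DERIV_ident dv that)
    have hc: "continuous_on {R t1..L} h" unfolding h_def by (intro continuous_intros sl)
    obtain l z where lz: "R t1 < z" "z < L" "DERIV h z :> l" "h L - h (R t1) = (L - R t1) * l"
    proof -
      have "\<exists>l z. R t1 < z \<and> z < L \<and> DERIV h z :> l \<and> h L - h (R t1) = (L - R t1) * l"
        by (rule MVT[OF Rt1(2) hc]) (use hd in \<open>auto simp: real_differentiable_def\<close>)
      thus ?thesis using that by blast
    qed
    have "l = v z t1 + vr z t1 * z" using DERIV_unique[OF lz(3) hd[OF lz(1,2)]] by simp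
    also have "\<dots> = z * (v z t1 / z + vr z t1)" using lz Rt1 by (simp add: field_simps)
    also have "\<dots> = z * (pres \<beta> (\<rho> z t1) + c)" using Dfact[of z] lz by simp
    also have "\<dots> \<le> z * (pres \<beta> M + c)"
      using rs(2) lz \<beta> Rt1 unfolding M_def by (intro mult_left_mono add_right_mono pres_mono) auto
    also have "\<dots> \<le> 0" using h1 lz Rt1 by (simp add: mult_nonneg_nonpos)
    finally have "l \<le> 0" .
    hence "(L - R t1) * l \<le> 0" using Rt1 by (simp add: mult_nonneg_nonpos)
    hence "h L \<le> h (R t1)" using lz(4) by linarith
    moreover have "h L = 0" unfolding h_def using v_L[OF t1T] by simp
    moreover have "h (R t1) = R t1 * (R t1 * c)" unfolding h_def c_def using Rt1 by simp
    moreover have "R t1 * (R t1 * c) < 0" using Rt1 cneg by (simp add: mult_pos_neg)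
    ultimately show False by linarith
  qed
  have aO: "(R t1, t1) \<in> Omega R L T" using Om_t1 Rt1 by auto
  have Mpos: "M > 0" using M params by simp
  have Ma: "\<rho> (R t1) t1 = M" if "rs = R t1" using that unfolding M_def by simp
  have P0le: "\<rho>r (R t1) t1 \<le> 0" if "rs = R t1"
    using deriv_max_right[OF rho_r[OF aO] _ Rt1(2)] rs(2) that by auto
  have dRc: "\<exists>\<eta>>0. \<forall>s\<in>{0..<T}. \<bar>s - t1\<bar> < \<eta> \<longrightarrow> \<bar>dR s - dR t1\<bar> < e" if "e > 0" for e
    using cont_pt1[OF dR_cont t1T that] .
  have Rmvt: "\<exists>\<sigma>\<in>{\<tau>..t1}. R t1 - R \<tau> = dR \<sigma> * (t1 - \<tau>)" if "0 \<le> \<tau>" "\<tau> \<le> t1" for \<tau>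
  proof -
    have "\<exists>x\<in>{\<tau>..t1}. R t1 - R \<tau> = (*) (dR x) (t1 - \<tau>)"
    proof (rule mvt_very_simple)
      show "\<tau> \<le> t1" by fact
      fix x assume x: "\<tau> \<le> x" "x \<le> t1"
      hence "x \<in> {0..<T}" using that t1T by auto
      hence "(R has_real_derivative dR x) (at x within {\<tau>..t1})"
        by (rule has_field_derivative_subset[OF R_deriv]) (use that t1T in auto)
      thus "(R has_derivative (*) (dR x)) (at x within {\<tau>..t1})"
        by (simp add: has_field_derivative_def)
    qed
    thus ?thesis by simp
  qed
  have tmvt: "\<exists>x\<in>{s'..t'}. \<rho> r t' - \<rho> r s' = \<rho>t r x * (t' - s')"
    if "s' \<le> t'" "\<And>\<tau>. \<tau> \<in> {s'..t'} \<Longrightarrow> (r,\<tau>) \<in> Omega R L T" for r s' t'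
  proof -
    have "\<exists>x\<in>{s'..t'}. \<rho> r t' - \<rho> r s' = (*) (\<rho>t r x) (t' - s')"
    proof (rule mvt_very_simple)
      show "s' \<le> t'" by fact
      fix x assume "s' \<le> x" "x \<le> t'"
      hence "((\<lambda>\<tau>. \<rho> r \<tau>) has_real_derivative \<rho>t r x) (at x within {s'..t'})"
        using rho_t[OF that(2)[of x]] that(2) by (auto intro: has_field_derivative_subset)
      thus "((\<lambda>\<tau>. \<rho> r \<tau>) has_derivative (*) (\<rho>t r x)) (at x within {s'..t'})"
        by (simp add: has_field_derivative_def)
    qed
    thus ?thesis by simp
  qed
  have rmvt: "\<exists>x\<in>{a'..b'}. \<rho> b' t - \<rho> a' t = \<rho>r x t * (b' - a')"
    if "a' \<le> b'" "R t \<le> a'" "b' \<le> L" "t \<in> {0..<T}" for a' b' t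
  proof -
    have "\<exists>x\<in>{a'..b'}. \<rho> b' t - \<rho> a' t = (*) (\<rho>r x t) (b' - a')"
    proof (rule mvt_very_simple)
      show "a' \<le> b'" by fact
      fix x assume x: "a' \<le> x" "x \<le> b'"
      hence xO: "(x,t) \<in> Omega R L T" using that by (auto simp: Omega_def)
      have "((\<lambda>y. \<rho> y t) has_real_derivative \<rho>r x t) (at x within {a'..b'})"
        using rho_t rho_r[OF xO] that by (auto intro: has_field_derivative_subset)
      thus "((\<lambda>y. \<rho> y t) has_derivative (*) (\<rho>r x t)) (at x within {a'..b'})"
        by (simp add: has_field_derivative_def)
    qed
    thus ?thesis by simp
  qed
  have caseB: "\<rho>t (R t1) t1 + dR t1 * \<rho>r (R t1) t1 \<ge> 0" if rsa: "rs = R t1" and Dle: "dR t1 \<le> 0"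
  proof (rule ccontr)
    define Q0 where "Q0 = \<rho>t (R t1) t1"
    define P0 where "P0 = \<rho>r (R t1) t1"
    define D0 where "D0 = dR t1"
    assume "\<not> ?thesis"
    hence X: "Q0 + D0 * P0 < 0" unfolding Q0_def P0_def D0_def by simp
    define e where "e = min 1 (- (Q0 + D0 * P0) / (\<bar>D0\<bar> + \<bar>P0\<bar> + 3))"
    have e: "0 < e" "e \<le> 1" "e * (\<bar>D0\<bar> + \<bar>P0\<bar> + 3) \<le> - (Q0 + D0 * P0)"
    proof -
      have pos: "\<bar>D0\<bar> + \<bar>P0\<bar> + 3 > 0" by simp
      show "0 < e" "e \<le> 1" using X pos unfolding e_def by auto
      have "e \<le> - (Q0 + D0 * P0) / (\<bar>D0\<bar> + \<bar>P0\<bar> + 3)" unfolding e_def by simp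
      thus "e * (\<bar>D0\<bar> + \<bar>P0\<bar> + 3) \<le> - (Q0 + D0 * P0)" using pos by (simp add: pos_le_divide_eq)
    qed
    obtain d1 where d1: "d1>0" "\<forall>r' t'. (r',t') \<in> Omega R L T \<longrightarrow> \<bar>r'-R t1\<bar> < d1 \<longrightarrow> \<bar>t'-t1\<bar> < d1 \<longrightarrow> \<bar>\<rho>t r' t' - Q0\<bar> < e"
      using cont_pt2[OF rho_t_cont aO e(1)] unfolding Q0_def by blast
    obtain d2 where d2: "d2>0" "\<forall>r' t'. (r',t') \<in> Omega R L T \<longrightarrow> \<bar>r'-R t1\<bar> < d2 \<longrightarrow> \<bar>t'-t1\<bar> < d2 \<longrightarrow> \<bar>\<rho>r r' t' - P0\<bar> < e"
      using cont_pt2[OF rho_r_cont aO e(1)] unfolding P0_def by blast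
    obtain \<eta> where \<eta>: "\<eta>>0" "\<forall>s\<in>{0..<T}. \<bar>s - t1\<bar> < \<eta> \<longrightarrow> \<bar>dR s - D0\<bar> < e"
      using dRc[OF e(1)] unfolding D0_def by blast
    define K where "K = - D0 + e"
    have Kpos: "K > 0" using Dle e unfolding K_def D0_def by simp
    define \<epsilon> where "\<epsilon> = min (min (min (d1/2) (d2/2)) (min (\<eta>/2) t1)) (min (d1/(2*K)) (min (d2/(2*K)) ((L - R t1)/K)))"
    have "\<epsilon> \<le> d1/2" "\<epsilon> \<le> d2/2" "\<epsilon> \<le> \<eta>/2" "\<epsilon> \<le> t1"
      unfolding \<epsilon>_def by (meson min.cobounded1 min.cobounded2 order.trans)+
    moreover have "0 < \<epsilon>" using d1 d2 \<eta> t1pos Kpos Rt1 unfolding \<epsilon>_def by simp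
    ultimately have \<epsilon>: "0 < \<epsilon>" "\<epsilon> \<le> t1" "\<epsilon> < d1" "\<epsilon> < d2" "\<epsilon> < \<eta>"
      using d1 d2 \<eta> by linarith+
    have K\<epsilon>: "K * \<epsilon> < d1" "K * \<epsilon> < d2" "K * \<epsilon> \<le> L - R t1"
    proof -
      have "\<epsilon> \<le> d1/(2*K)" "\<epsilon> \<le> d2/(2*K)" "\<epsilon> \<le> (L - R t1)/K"
        unfolding \<epsilon>_def by (auto intro: min.coboundedI1 min.coboundedI2)
      hence a: "\<epsilon> * (2*K) \<le> d1" "\<epsilon> * (2*K) \<le> d2" "\<epsilon> * K \<le> L - R t1" using Kpos
        by (simp_all add: pos_le_divide_eq)
      have "0 < \<epsilon> * K" using Kpos \<epsilon>(1) by simp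
      thus "K * \<epsilon> < d1" "K * \<epsilon> < d2" "K * \<epsilon> \<le> L - R t1" using a
        by (simp_all add: algebra_simps)
    qed
    define s where "s = t1 - \<epsilon>"
    define c where "c = R t1 + K * \<epsilon>"
    have cL: "R t1 \<le> c" "c \<le> L" using K\<epsilon> Kpos \<epsilon> unfolding c_def by auto
    have sT: "0 \<le> s" "s \<le> t1" using \<epsilon> unfolding s_def by auto
    have inOc: "(c,\<tau>) \<in> Omega R L T" if "\<tau> \<in> {s..t1}" for \<tau>
    proof -
      have \<tau>: "0 \<le> \<tau>" "\<tau> \<le> t1" "\<tau> < T" using that sT t1T by auto
      obtain \<sigma> where \<sigma>: "\<sigma> \<in> {\<tau>..t1}" "R t1 - R \<tau> = dR \<sigma> * (t1 - \<tau>)" using Rmvt[OF \<tau>(1,2)] by blast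
      have "\<sigma> \<in> {0..<T}" "\<bar>\<sigma> - t1\<bar> < \<eta>" using \<sigma> \<tau> \<epsilon> that t1T unfolding s_def by auto
      hence "\<bar>dR \<sigma> - D0\<bar> < e" using \<eta> by blast
      hence "- dR \<sigma> \<le> K" unfolding K_def by linarith
      hence "- dR \<sigma> * (t1 - \<tau>) \<le> K * (t1 - \<tau>)" using \<tau> by (intro mult_right_mono) auto
      also have "\<dots> \<le> K * \<epsilon>" using Kpos that unfolding s_def by (intro mult_left_mono) auto
      finally have "R \<tau> \<le> c" using \<sigma>(2) unfolding c_def by linarith
      thus ?thesis using cL \<tau> by (auto simp: Omega_def)
    qed
    obtain \<tau>1 where \<tau>1: "\<tau>1 \<in> {s..t1}" "\<rho> c t1 - \<rho> c s = \<rho>t c \<tau>1 * (t1 - s)"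
      using tmvt[OF sT(2) inOc] by blast
    obtain \<xi> where \<xi>: "\<xi> \<in> {R t1..c}" "\<rho> c t1 - \<rho> (R t1) t1 = \<rho>r \<xi> t1 * (c - R t1)"
      using rmvt[OF cL(1) order_refl cL(2) t1T] by blast
    have "\<rho> c s < \<rho>m" using past[OF inOc[of s]] sT \<epsilon> unfolding s_def by auto
    hence "\<rho>t c \<tau>1 * \<epsilon> > \<rho>r \<xi> t1 * (K * \<epsilon>)"
      using \<tau>1 \<xi> M Ma[OF rsa] unfolding s_def c_def by simp
    hence Qgt: "\<rho>t c \<tau>1 > \<rho>r \<xi> t1 * K" using \<epsilon>(1) by (simp add: mult.assoc[symmetric] mult.commute[of _ \<epsilon>])
    have "\<bar>\<rho>t c \<tau>1 - Q0\<bar> < e"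
      using d1(2) inOc[OF \<tau>1(1)] \<tau>1(1) K\<epsilon> \<epsilon> Kpos unfolding s_def c_def by (auto simp: abs_le_iff)
    moreover have "\<bar>\<rho>r \<xi> t1 - P0\<bar> < e"
    proof -
      have "(\<xi>, t1) \<in> Omega R L T" using \<xi> cL by (intro Om_t1) auto
      moreover have "\<bar>\<xi> - R t1\<bar> < d2" using \<xi> K\<epsilon> unfolding c_def by auto
      ultimately show ?thesis using d2 by auto
    qed
    ultimately have A1: "\<rho>t c \<tau>1 < Q0 + e" and A2: "\<bar>\<rho>r \<xi> t1 - P0\<bar> < e" by linarith+
    have A3: "\<rho>t c \<tau>1 > \<rho>r \<xi> t1 * (- D0 + e)" using Qgt unfolding K_def .
    show False by (rule arithB[OF A1 A2 A3 e(1,2,3)])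
  qed
  have caseC: "\<rho>t (R t1) t1 + dR t1 * \<rho>r (R t1) t1 \<ge> 0" if rsa: "rs = R t1" and Dgt: "dR t1 > 0"
  proof (rule ccontr)
    define Q0 where "Q0 = \<rho>t (R t1) t1"
    define P0 where "P0 = \<rho>r (R t1) t1"
    define D0 where "D0 = dR t1"
    assume "\<not> ?thesis"
    hence X: "Q0 + D0 * P0 < 0" unfolding Q0_def P0_def D0_def by simp
    define e where "e = min (min 1 D0) (- (Q0 + D0 * P0) / (\<bar>D0\<bar> + \<bar>P0\<bar> + 3))"
    have e: "0 < e" "e \<le> 1" "e * (\<bar>D0\<bar> + \<bar>P0\<bar> + 3) \<le> - (Q0 + D0 * P0)" "e \<le> D0"
    proof -
      have pos: "\<bar>D0\<bar> + \<bar>P0\<bar> + 3 > 0" by simp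
      show "0 < e" "e \<le> 1" "e \<le> D0" using X pos Dgt unfolding e_def D0_def by auto
      have "e \<le> - (Q0 + D0 * P0) / (\<bar>D0\<bar> + \<bar>P0\<bar> + 3)" unfolding e_def by simp
      thus "e * (\<bar>D0\<bar> + \<bar>P0\<bar> + 3) \<le> - (Q0 + D0 * P0)" using pos by (simp add: pos_le_divide_eq)
    qed
    obtain d1 where d1: "d1>0" "\<forall>r' t'. (r',t') \<in> Omega R L T \<longrightarrow> \<bar>r'-R t1\<bar> < d1 \<longrightarrow> \<bar>t'-t1\<bar> < d1 \<longrightarrow> \<bar>\<rho>t r' t' - Q0\<bar> < e"
      using cont_pt2[OF rho_t_cont aO e(1)] unfolding Q0_def by blast
    obtain d2 where d2: "d2>0" "\<forall>r' t'. (r',t') \<in> Omega R L T \<longrightarrow> \<bar>r'-R t1\<bar> < d2 \<longrightarrow> \<bar>t'-t1\<bar> < d2 \<longrightarrow> \<bar>\<rho>r r' t' - P0\<bar> < e"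
      using cont_pt2[OF rho_r_cont aO e(1)] unfolding P0_def by blast
    obtain \<eta>1 where \<eta>1: "\<eta>1>0" "\<forall>s\<in>{0..<T}. \<bar>s - t1\<bar> < \<eta>1 \<longrightarrow> \<bar>dR s - D0\<bar> < e"
      using dRc[OF e(1)] unfolding D0_def by blast
    obtain \<eta>2 where \<eta>2: "\<eta>2>0" "\<forall>s\<in>{0..<T}. \<bar>s - t1\<bar> < \<eta>2 \<longrightarrow> \<bar>R s - R t1\<bar> < d2"
      using cont_pt1[OF Rcont t1T d2(1)] by blast
    define \<epsilon> where "\<epsilon> = min (min (d1/2) (d2/2)) (min (min (\<eta>1/2) (\<eta>2/2)) t1)"
    have "\<epsilon> \<le> d1/2" "\<epsilon> \<le> d2/2" "\<epsilon> \<le> \<eta>1/2" "\<epsilon> \<le> \<eta>2/2" "\<epsilon> \<le> t1"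
      unfolding \<epsilon>_def by (meson min.cobounded1 min.cobounded2 order.trans)+
    moreover have "0 < \<epsilon>" using d1 d2 \<eta>1 \<eta>2 t1pos unfolding \<epsilon>_def by simp
    ultimately have \<epsilon>: "0 < \<epsilon>" "\<epsilon> \<le> t1" "\<epsilon> < d1" "\<epsilon> < d2" "\<epsilon> < \<eta>1" "\<epsilon> < \<eta>2"
      using d1 d2 \<eta>1 \<eta>2 by linarith+
    define s where "s = t1 - \<epsilon>"
    have sT: "0 \<le> s" "s \<le> t1" "s \<in> {0..<T}" using \<epsilon> t1T unfolding s_def by auto
    have Rle: "R \<tau> \<le> R t1" if "\<tau> \<in> {s..t1}" for \<tau>
    proof -
      have \<tau>: "0 \<le> \<tau>" "\<tau> \<le> t1" using that sT by auto
      obtain \<sigma> where \<sigma>: "\<sigma> \<in> {\<tau>..t1}" "R t1 - R \<tau> = dR \<sigma> * (t1 - \<tau>)" using Rmvt[OF \<tau>] by blast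
      have "\<sigma> \<in> {0..<T}" "\<bar>\<sigma> - t1\<bar> < \<eta>1" using \<sigma> \<tau> \<epsilon> that t1T unfolding s_def by auto
      hence "\<bar>dR \<sigma> - D0\<bar> < e" using \<eta>1 by blast
      hence "dR \<sigma> \<ge> 0" using e by linarith
      hence "dR \<sigma> * (t1 - \<tau>) \<ge> 0" using \<tau> by simp
      thus ?thesis using \<sigma>(2) by linarith
    qed
    have inO1: "(R t1,\<tau>) \<in> Omega R L T" if "\<tau> \<in> {s..t1}" for \<tau>
      using Rle[OF that] that sT t1T Rt1 by (auto simp: Omega_def)
    obtain \<tau>1 where \<tau>1: "\<tau>1 \<in> {s..t1}" "\<rho> (R t1) t1 - \<rho> (R t1) s = \<rho>t (R t1) \<tau>1 * (t1 - s)"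
      using tmvt[OF sT(2) inO1] by blast
    have Rs: "R s \<le> R t1" using Rle sT by auto
    obtain \<xi> where \<xi>: "\<xi> \<in> {R s..R t1}" "\<rho> (R t1) s - \<rho> (R s) s = \<rho>r \<xi> s * (R t1 - R s)"
      using rmvt[OF Rs order_refl _ sT(3)] Rt1 by auto
    obtain \<sigma> where \<sigma>: "\<sigma> \<in> {s..t1}" "R t1 - R s = dR \<sigma> * (t1 - s)" using Rmvt[OF sT(1,2)] by blast
    have "(R s, s) \<in> Omega R L T" using Rs Rt1 sT by (auto simp: Omega_def)
    hence "\<rho> (R s) s < \<rho>m" using past \<epsilon> unfolding s_def by auto
    hence "0 < \<rho> (R t1) t1 - \<rho> (R s) s" using M Ma[OF rsa] by simp
    also have "\<dots> = (\<rho>t (R t1) \<tau>1 + \<rho>r \<xi> s * dR \<sigma>) * \<epsilon>"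
      using \<tau>1(2) \<xi>(2) \<sigma>(2) unfolding s_def by (simp add: algebra_simps)
    finally have pos: "\<rho>t (R t1) \<tau>1 + \<rho>r \<xi> s * dR \<sigma> > 0" using \<epsilon>(1) by (simp add: zero_less_mult_iff)
    have A1: "\<rho>t (R t1) \<tau>1 < Q0 + e"
    proof -
      have "\<bar>\<rho>t (R t1) \<tau>1 - Q0\<bar> < e" using d1(2) inO1[OF \<tau>1(1)] \<tau>1(1) \<epsilon> unfolding s_def by auto
      thus ?thesis by linarith
    qed
    have A2: "\<bar>\<rho>r \<xi> s - P0\<bar> < e"
    proof -
      have "(\<xi>, s) \<in> Omega R L T" using \<xi> Rt1 sT by (auto simp: Omega_def)
      moreover have "\<bar>R s - R t1\<bar> < d2" using \<eta>2 sT \<epsilon> unfolding s_def by auto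
      hence "\<bar>\<xi> - R t1\<bar> < d2" using \<xi> by auto
      moreover have "\<bar>s - t1\<bar> < d2" using \<epsilon> unfolding s_def by auto
      ultimately show ?thesis using d2 by auto
    qed
    have A3: "\<bar>dR \<sigma> - D0\<bar> < e" using \<eta>1 \<sigma> sT \<epsilon> t1T unfolding s_def by auto
    show False by (rule arithC[OF A1 A2 A3 pos e(1,2,3)])
  qed
  have key: "\<rho>t rs t1 + v rs t1 * \<rho>r rs t1 \<ge> 0"
  proof (cases "rs > R t1")
    case True
    have "v rs t1 * \<rho>r rs t1 = 0"
    proof (cases "rs < L")
      case True
      have "\<rho>r rs t1 \<le> 0" using deriv_max_right[OF rho_r[OF rsO] _ True] rs by auto
      moreover have "\<rho>r rs t1 \<ge> 0" using deriv_max_left[OF rho_r[OF rsO] \<open>rs > R t1\<close>] rs by auto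
      ultimately show ?thesis by simp
    next
      case False
      hence "rs = L" using rs by auto
      thus ?thesis using v_L[OF t1T] by simp
    qed
    thus ?thesis using caseA[OF True] by linarith
  next
    case False
    hence rsa: "rs = R t1" using rs by auto
    have vD: "v rs t1 = dR t1" using free_bdry[OF t1T] rsa by simp
    show ?thesis
    proof (cases "dR t1 \<le> 0")
      case True thus ?thesis using caseB[OF rsa True] vD rsa by (simp add: mult.commute)
    next
      case False thus ?thesis using caseC[OF rsa] vD rsa by (simp add: mult.commute)
    qed
  qed
  have Feq: "F rs = \<rho>t rs t1 + v rs t1 * \<rho>r rs t1 + M * (v rs t1 / rs + vr rs t1)"
    unfolding F_def M_def using rspos by (simp add: field_simps)
  have "M * (v rs t1 / rs + vr rs t1) > 0" using Mpos Dpos by simp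
  hence Fpos: "F rs > 0" using Feq key by linarith
  have Sn: "k\<rho> * w rs t1 / (w rs t1 + Kw\<rho>) * f rs t1 \<ge> 0"
    using params w_nonneg[OF rsO] f_nonneg[OF rsO] by simp
  have "1 - M / \<rho>m \<le> 0" using M params by simp
  hence "k\<rho> * w rs t1 / (w rs t1 + Kw\<rho>) * f rs t1 * (1 - M / \<rho>m) \<le> 0"
    by (rule mult_nonneg_nonpos[OF Sn])
  moreover have "lam\<rho> * M > 0" using params Mpos by simp
  ultimately have "G rs < 0" unfolding G_def M_def by simp
  thus False using FG Fpos by simp
qed

end
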